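(* Let $d = 3$, $\rho \ge 0$, and let $r^{(1)}, \dots, r^{(\rho)} \in (0,1)^3$ be pairwise incomparable points whose $3\rho$ coordinates are all distinct. Then the number $\gamma$ of generators of their record-setting region equals $2\rho + 1$.
   Context: For $x,y \in \mathbb{R}^3$, $x \prec y$ means $x_j < y_j$ for all $j$, and $x \le y$ means $x_j \le y_j$ for all $j$; points are incomparable if neither is $\le$ the other. The record-setting region of points $r^{(1)},\dots,r^{(\rho)}$ is $S := \{x \in [0,1)^3 : x \not\prec r^{(i)} \text{ for all } i \in [\rho]\}$, and its generators are the minimal elements of $S$ with respect to $\le$. *)

theory Defs
  imports "HOL-Analysis.Analysis"
begin

definition strict_below :: "real^3 \<Rightarrow> real^3 \<Rightarrow> bool" where
  "strict_below x y \<longleftrightarrow> (\<forall>j. x $ j < y $ j)"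

definition weak_below :: "real^3 \<Rightarrow> real^3 \<Rightarrow> bool" where
  "weak_below x y \<longleftrightarrow> (\<forall>j. x $ j \<le> y $ j)"

definition incomparable :: "real^3 \<Rightarrow> real^3 \<Rightarrow> bool" where
  "incomparable x y \<longleftrightarrow> \<not> weak_below x y \<and> \<not> weak_below y x"

definition record_region :: "(real^3) set \<Rightarrow> (real^3) set" where
  "record_region R = {x. (\<forall>j. 0 \<le> x $ j \<and> x $ j < 1) \<and> (\<forall>r\<in>R. \<not> strict_below x r)}"

definition generators :: "(real^3) set \<Rightarrow> (real^3) set" where
  "generators S = {x \<in> S. \<forall>y\<in>S. weak_below y x \<longrightarrow> y = x}"

end

theory Submission
  imports Defs
begin


definition m2 :: "(real \<times> real) set \<Rightarrow> (real \<times> real) set" where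
 "m2 P = {y. 0 \<le> fst y \<and> fst y < 1 \<and> 0 \<le> snd y \<and> snd y < 1 \<and>
    (\<forall>z\<in>P. fst z \<le> fst y \<or> snd z \<le> snd y) \<and>
    (0 < fst y \<longrightarrow> (\<exists>z\<in>P. fst y = fst z \<and> snd y < snd z)) \<and>
    (0 < snd y \<longrightarrow> (\<exists>z\<in>P. snd y = snd z \<and> fst y < fst z))}"

lemma m2_finite:
  assumes "finite P" shows "finite (m2 P)"
proof -
  let ?F = "insert 0 (fst ` P \<union> snd ` P)"
  have "m2 P \<subseteq> ?F \<times> ?F"
  proof
    fix y assume y: "y \<in> m2 P"
    obtain a b where ab: "y = (a,b)" by force
    have "a \<in> ?F" using y ab unfolding m2_def by (cases "0 < a") force+
    moreover have "b \<in> ?F" using y ab unfolding m2_def by (cases "0 < b") force+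
    ultimately show "y \<in> ?F \<times> ?F" using ab by (metis SigmaI)
  qed
  thus ?thesis by (rule finite_subset) (use assms in auto)
qed

lemma m2_A:
  assumes fin: "finite P"
    and Pb: "\<forall>z\<in>P. 0 < fst z \<and> fst z < 1 \<and> 0 < snd z \<and> snd z < 1"
    and qb: "0 < q1" "q1 < 1" "0 < q2" "q2 < 1"
    and nd: "\<forall>z\<in>P. \<not> (q1 \<le> fst z \<and> q2 \<le> snd z)"
    and dq: "\<forall>z\<in>P. fst z \<noteq> q1 \<and> snd z \<noteq> q2"
  shows "\<exists>t. {y \<in> m2 (insert (q1,q2) P). fst y = q1} = {(q1,t)} \<and> t < q2"
proof -
  define T where "T = insert 0 (snd ` {z\<in>P. q1 < fst z})"
  define t where "t = Max T"
  have Tf: "finite T" using fin unfolding T_def by auto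
  have tT: "t \<in> T" unfolding t_def using Tf by (intro Max_in) (auto simp: T_def)
  have tge: "\<And>s. s \<in> T \<Longrightarrow> s \<le> t" unfolding t_def using Tf by simp
  have Tlt: "\<forall>s\<in>T. s < q2" unfolding T_def using nd qb dq by force
  have tlt: "t < q2" using tT Tlt by blast
  have t0: "0 \<le> t" using tge T_def by simp
  have f1: "\<forall>z\<in>P. fst z \<le> q1 \<or> snd z \<le> t"
  proof
    fix z assume zP: "z \<in> P"
    show "fst z \<le> q1 \<or> snd z \<le> t"
    proof (cases "q1 < fst z")
      case True
      then have "snd z \<in> T" unfolding T_def using zP by force
      then show ?thesis using tge by auto
    qed simp
  qed
  have f2: "0 < t \<longrightarrow> (\<exists>z\<in>P. t = snd z \<and> q1 < fst z)"
  proof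
    assume "0 < t"
    then have "t \<in> snd ` {z\<in>P. q1 < fst z}" using tT T_def by auto
    then show "\<exists>z\<in>P. t = snd z \<and> q1 < fst z" by force
  qed
  have mem: "(q1,t) \<in> m2 (insert (q1,q2) P)"
    unfolding m2_def mem_Collect_eq fst_conv snd_conv
  proof (intro conjI)
    show "\<forall>z\<in>insert (q1, q2) P. fst z \<le> q1 \<or> snd z \<le> t" using f1 by simp
    show "0 < q1 \<longrightarrow> (\<exists>z\<in>insert (q1, q2) P. q1 = fst z \<and> t < snd z)" using tlt by auto
    show "0 < t \<longrightarrow> (\<exists>z\<in>insert (q1, q2) P. t = snd z \<and> q1 < fst z)" using f2 by blast
  qed (use qb t0 tlt in auto)
  have uniq: "y = (q1,t)" if y: "y \<in> m2 (insert (q1,q2) P)" "fst y = q1" for y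
  proof -
    obtain b where b: "y = (q1,b)" using y(2) by (cases y) auto
    have h: "0 \<le> b" "\<forall>z\<in>P. fst z \<le> q1 \<or> snd z \<le> b"
       "0 < b \<longrightarrow> (\<exists>z\<in>insert (q1,q2) P. b = snd z \<and> q1 < fst z)"
      using y(1) unfolding b m2_def by auto
    have "b \<ge> t"
    proof -
      have "\<forall>s\<in>T. s \<le> b"
      proof
        fix s assume "s \<in> T"
        then show "s \<le> b" unfolding T_def using h(1,2) by force
      qed
      then show ?thesis using tT by blast
    qed
    moreover have "b \<le> t"
    proof (cases "0 < b")
      case True
      then obtain z where z: "z \<in> P" "b = snd z" "q1 < fst z" using h(3) by auto
      then have "b \<in> T" unfolding T_def by auto
      then show ?thesis using tge by auto
    next
      case False then show ?thesis using t0 by simp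
    qed
    ultimately show ?thesis using b by simp
  qed
  have "{y \<in> m2 (insert (q1,q2) P). fst y = q1} = {(q1,t)}"
  proof
    show "{(q1,t)} \<subseteq> {y \<in> m2 (insert (q1,q2) P). fst y = q1}" using mem by simp
    show "{y \<in> m2 (insert (q1,q2) P). fst y = q1} \<subseteq> {(q1,t)}" using uniq by blast
  qed
  then show ?thesis using tlt by blast
qed

lemma m2_B:
  assumes fin: "finite P"
    and Pb: "\<forall>z\<in>P. 0 < fst z \<and> fst z < 1 \<and> 0 < snd z \<and> snd z < 1"
    and qb: "0 < q1" "q1 < 1" "0 < q2" "q2 < 1"
    and nd: "\<forall>z\<in>P. \<not> (q1 \<le> fst z \<and> q2 \<le> snd z)"
    and dq: "\<forall>z\<in>P. fst z \<noteq> q1 \<and> snd z \<noteq> q2"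
  shows "\<exists>t. {y \<in> m2 (insert (q1,q2) P). snd y = q2} = {(t,q2)} \<and> t < q1"
proof -
  define T where "T = insert 0 (fst ` {z\<in>P. q2 < snd z})"
  define t where "t = Max T"
  have Tf: "finite T" using fin unfolding T_def by auto
  have tT: "t \<in> T" unfolding t_def using Tf by (intro Max_in) (auto simp: T_def)
  have tge: "\<And>s. s \<in> T \<Longrightarrow> s \<le> t" unfolding t_def using Tf by simp
  have Tlt: "\<forall>s\<in>T. s < q1" unfolding T_def using nd qb dq by force
  have tlt: "t < q1" using tT Tlt by blast
  have t0: "0 \<le> t" using tge T_def by simp
  have f1: "\<forall>z\<in>P. fst z \<le> t \<or> snd z \<le> q2"
  proof
    fix z assume zP: "z \<in> P"
    show "fst z \<le> t \<or> snd z \<le> q2"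
    proof (cases "q2 < snd z")
      case True
      then have "fst z \<in> T" unfolding T_def using zP by force
      then show ?thesis using tge by auto
    qed simp
  qed
  have f2: "0 < t \<longrightarrow> (\<exists>z\<in>P. t = fst z \<and> q2 < snd z)"
  proof
    assume "0 < t"
    then have "t \<in> fst ` {z\<in>P. q2 < snd z}" using tT T_def by auto
    then show "\<exists>z\<in>P. t = fst z \<and> q2 < snd z" by force
  qed
  have mem: "(t,q2) \<in> m2 (insert (q1,q2) P)"
    unfolding m2_def mem_Collect_eq fst_conv snd_conv
  proof (intro conjI)
    show "\<forall>z\<in>insert (q1, q2) P. fst z \<le> t \<or> snd z \<le> q2" using f1 by simp
    show "0 < q2 \<longrightarrow> (\<exists>z\<in>insert (q1, q2) P. q2 = snd z \<and> t < fst z)" using tlt by auto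
    show "0 < t \<longrightarrow> (\<exists>z\<in>insert (q1, q2) P. t = fst z \<and> q2 < snd z)" using f2 by blast
  qed (use qb t0 tlt in auto)
  have uniq: "y = (t,q2)" if y: "y \<in> m2 (insert (q1,q2) P)" "snd y = q2" for y
  proof -
    obtain b where b: "y = (b,q2)" using y(2) by (cases y) auto
    have h: "0 \<le> b" "\<forall>z\<in>P. fst z \<le> b \<or> snd z \<le> q2"
       "0 < b \<longrightarrow> (\<exists>z\<in>insert (q1,q2) P. b = fst z \<and> q2 < snd z)"
      using y(1) unfolding b m2_def by auto
    have "b \<ge> t"
    proof -
      have "\<forall>s\<in>T. s \<le> b"
      proof
        fix s assume "s \<in> T"
        then show "s \<le> b" unfolding T_def using h(1,2) by force
      qed
      then show ?thesis using tT by blast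
    qed
    moreover have "b \<le> t"
    proof (cases "0 < b")
      case True
      then obtain z where z: "z \<in> P" "b = fst z" "q2 < snd z" using h(3) by auto
      then have "b \<in> T" unfolding T_def by auto
      then show ?thesis using tge by auto
    next
      case False then show ?thesis using t0 by simp
    qed
    ultimately show ?thesis using b by simp
  qed
  have "{y \<in> m2 (insert (q1,q2) P). snd y = q2} = {(t,q2)}"
  proof
    show "{(t,q2)} \<subseteq> {y \<in> m2 (insert (q1,q2) P). snd y = q2}" using mem by simp
    show "{y \<in> m2 (insert (q1,q2) P). snd y = q2} \<subseteq> {(t,q2)}" using uniq by blast
  qed
  then show ?thesis using tlt by blast
qed

lemma m2_step:
  assumes fin: "finite P"
    and Pb: "\<forall>z\<in>P. 0 < fst z \<and> fst z < 1 \<and> 0 < snd z \<and> snd z < 1"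
    and qb: "0 < q1" "q1 < 1" "0 < q2" "q2 < 1"
    and nd: "\<forall>z\<in>P. \<not> (q1 \<le> fst z \<and> q2 \<le> snd z)"
    and dq: "\<forall>z\<in>P. fst z \<noteq> q1 \<and> snd z \<noteq> q2"
  shows "card (m2 (insert (q1,q2) P)) + card {y \<in> m2 P. fst y < q1 \<and> snd y < q2} = card (m2 P) + 2"
proof -
  obtain t where t: "{y \<in> m2 (insert (q1,q2) P). fst y = q1} = {(q1,t)}" "t < q2"
    using m2_A[OF assms] by blast
  obtain s where s: "{y \<in> m2 (insert (q1,q2) P). snd y = q2} = {(s,q2)}" "s < q1"
    using m2_B[OF assms] by blast
  define Bl where "Bl = {y \<in> m2 P. fst y < q1 \<and> snd y < q2}"
  have fm: "finite (m2 P)" by (rule m2_finite[OF fin])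
  have BlS: "Bl \<subseteq> m2 P" unfolding Bl_def by auto
  have a: "y \<in> m2 (insert (q1,q2) P)" if "y \<in> m2 P" "y \<notin> Bl" for y
    using that unfolding m2_def Bl_def by auto
  have b: "y \<in> m2 P - Bl" if "y \<in> m2 (insert (q1,q2) P)" "fst y \<noteq> q1" "snd y \<noteq> q2" for y
  proof -
    have h: "0 \<le> fst y" "fst y < 1" "0 \<le> snd y" "snd y < 1"
      "\<forall>z\<in>insert (q1,q2) P. fst z \<le> fst y \<or> snd z \<le> snd y"
      "0 < fst y \<longrightarrow> (\<exists>z\<in>insert (q1,q2) P. fst y = fst z \<and> snd y < snd z)"
      "0 < snd y \<longrightarrow> (\<exists>z\<in>insert (q1,q2) P. snd y = snd z \<and> fst y < fst z)"
      using that(1) unfolding m2_def by auto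
    have "0 < fst y \<longrightarrow> (\<exists>z\<in>P. fst y = fst z \<and> snd y < snd z)"
      using h(6) that(2) by auto
    moreover have "0 < snd y \<longrightarrow> (\<exists>z\<in>P. snd y = snd z \<and> fst y < fst z)"
      using h(7) that(3) by auto
    ultimately have "y \<in> m2 P" using h(1-5) unfolding m2_def by auto
    moreover have "\<not> (fst y < q1 \<and> snd y < q2)" using h(5) by auto
    ultimately show ?thesis unfolding Bl_def by auto
  qed
  have A1: "(q1,t) \<notin> m2 P" using dq qb unfolding m2_def by auto
  have A2: "(s,q2) \<notin> m2 P" using dq qb unfolding m2_def by auto
  have eq: "m2 (insert (q1,q2) P) = (m2 P - Bl) \<union> {(q1,t),(s,q2)}"
  proof
    show "m2 (insert (q1,q2) P) \<subseteq> (m2 P - Bl) \<union> {(q1,t),(s,q2)}"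
    proof
      fix y assume y: "y \<in> m2 (insert (q1,q2) P)"
      show "y \<in> (m2 P - Bl) \<union> {(q1,t),(s,q2)}"
      proof (cases "fst y = q1")
        case True then have "y = (q1,t)" using t(1) y by blast
        then show ?thesis by simp
      next
        case F1: False
        show ?thesis
        proof (cases "snd y = q2")
          case True then have "y = (s,q2)" using s(1) y by blast
          then show ?thesis by simp
        next
          case False then show ?thesis using b[OF y F1] by blast
        qed
      qed
    qed
    show "(m2 P - Bl) \<union> {(q1,t),(s,q2)} \<subseteq> m2 (insert (q1,q2) P)"
      using a t(1) s(1) by blast
  qed
  have ne: "(q1,t) \<noteq> (s,q2)" using t(2) by auto
  have "card (m2 (insert (q1,q2) P)) = card (m2 P - Bl) + 2"
    unfolding eq using A1 A2 ne fm by (subst card_Un_disjoint) auto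
  moreover have "card (m2 P - Bl) + card Bl = card (m2 P)"
    using BlS fm card_Diff_subset[of Bl "m2 P"] card_mono[OF fm BlS] finite_subset[OF BlS fm] by simp
  ultimately show ?thesis unfolding Bl_def[symmetric] by simp
qed



definition Gc :: "(real^3) set \<Rightarrow> (real^3) set" where
 "Gc R = {x. x \<in> record_region R \<and> (\<forall>j. 0 < x$j \<longrightarrow> (\<exists>r\<in>R. x$j = r$j \<and> (\<forall>k. k \<noteq> j \<longrightarrow> x$k < r$k)))}"

lemma gen_sub: assumes fin: "finite R" and xg: "x \<in> generators (record_region R)"
  shows "x \<in> Gc R"
proof -
  have xS: "x \<in> record_region R" and minx: "\<And>y. y \<in> record_region R \<Longrightarrow> weak_below y x \<Longrightarrow> y = x"
    using xg unfolding generators_def by auto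
  have xb: "\<forall>j. 0 \<le> x$j \<and> x$j < 1" and xn: "\<forall>r\<in>R. \<not> strict_below x r"
    using xS unfolding record_region_def by auto
  have "\<exists>r\<in>R. x$j = r$j \<and> (\<forall>k. k \<noteq> j \<longrightarrow> x$k < r$k)" if pos: "0 < x$j" for j
  proof -
    have "\<exists>r\<in>R. x$j \<le> r$j \<and> (\<forall>k. k \<noteq> j \<longrightarrow> x$k < r$k)"
    proof (rule ccontr)
      assume nex: "\<not> ?thesis"
      define T where "T = insert 0 ((\<lambda>r. r$j) ` {r\<in>R. r$j < x$j})"
      define t where "t = Max T"
      have Tf: "finite T" using fin unfolding T_def by auto
      have tT: "t \<in> T" unfolding t_def using Tf by (intro Max_in) (auto simp: T_def)
      have tge: "\<And>s. s \<in> T \<Longrightarrow> s \<le> t" unfolding t_def using Tf by simp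
      have tlt: "t < x$j" using tT pos unfolding T_def by auto
      have t0: "0 \<le> t" using tge T_def by simp
      define y where "y = (\<chi> k. if k = j then t else x$k)"
      have yj: "y$j = t" and yk: "\<And>k. k \<noteq> j \<Longrightarrow> y$k = x$k" unfolding y_def by auto
      have "y \<in> record_region R"
        unfolding record_region_def mem_Collect_eq
      proof (rule conjI; (intro ballI allI)?)
        fix k show "0 \<le> y $ k \<and> y $ k < 1"
        proof (cases "k = j")
          case True
          have "x$j < 1" using xb by blast
          then show ?thesis using True yj t0 tlt by simp
        next
          case False then show ?thesis using yk xb by simp
        qed
      next
        fix r assume rR: "r \<in> R"
        show "\<not> strict_below y r"
        proof (cases "r$j < x$j")
          case True
          then have "r$j \<in> T" unfolding T_def using rR by auto
          then have "r$j \<le> y$j" using tge yj by auto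
          then show ?thesis unfolding strict_below_def by (auto simp: not_less)
        next
          case False
          then obtain k where "k \<noteq> j" "\<not> x$k < r$k" using nex rR by (auto simp: not_less)
          then show ?thesis unfolding strict_below_def using yk by metis
        qed
      qed
      moreover have "weak_below y x" unfolding weak_below_def
        using yj yk tlt by (metis less_imp_le order_refl)
      ultimately have "y = x" by (rule minx)
      then show False using yj tlt by simp
    qed
    then obtain r where r: "r \<in> R" "x$j \<le> r$j" "\<forall>k. k \<noteq> j \<longrightarrow> x$k < r$k" by blast
    have "\<not> strict_below x r" using xn r(1) by blast
    then obtain k where "\<not> x$k < r$k" unfolding strict_below_def by auto
    then have "k = j" using r(3) by blast
    then have "x$j = r$j" using r(2) \<open>\<not> x$k < r$k\<close> by simp
    then show ?thesis using r by blast
  qed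
  then show ?thesis using xS unfolding Gc_def by blast
qed

lemma gen_sup: assumes x: "x \<in> Gc R" shows "x \<in> generators (record_region R)"
proof -
  have xS: "x \<in> record_region R" and bl: "\<And>j. 0 < x$j \<Longrightarrow> \<exists>r\<in>R. x$j = r$j \<and> (\<forall>k. k \<noteq> j \<longrightarrow> x$k < r$k)"
    using x unfolding Gc_def by auto
  have "y = x" if yS: "y \<in> record_region R" and yx: "weak_below y x" for y
  proof -
    have yb: "\<forall>j. 0 \<le> y$j" and yn: "\<forall>r\<in>R. \<not> strict_below y r"
      using yS unfolding record_region_def by auto
    have xb: "\<forall>j. 0 \<le> x$j" using xS unfolding record_region_def by auto
    have "y$j = x$j" for j
    proof (cases "0 < x$j")
      case True
      then obtain r where r: "r \<in> R" "x$j = r$j" "\<forall>k. k \<noteq> j \<longrightarrow> x$k < r$k" using bl by blast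
      show ?thesis
      proof (rule ccontr)
        assume "y$j \<noteq> x$j"
        then have "y$j < x$j" using yx unfolding weak_below_def by (meson order.not_eq_order_implies_strict)
        then have "strict_below y r" unfolding strict_below_def
          using r yx unfolding weak_below_def by (metis le_less_trans)
        then show False using yn r(1) by blast
      qed
    next
      case False
      have "y$j \<le> x$j" "0 \<le> y$j" "0 \<le> x$j" using yb xb yx unfolding weak_below_def by auto
      then show ?thesis using False by linarith
    qed
    then show ?thesis by (simp add: vec_eq_iff)
  qed
  then show ?thesis using xS unfolding generators_def by blast
qed

lemma gen_char: "finite R \<Longrightarrow> generators (record_region R) = Gc R"
  using gen_sub gen_sup by blast


lemma n3: "(1::3) \<noteq> 2" "(1::3) \<noteq> 3" "(2::3) \<noteq> 3" "(2::3) \<noteq> 1" "(3::3) \<noteq> 1" "(3::3) \<noteq> 2" by simp_all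

lemma Gc_iff: "x \<in> Gc R \<longleftrightarrow>
  (0 \<le> x$1 \<and> x$1 < 1 \<and> 0 \<le> x$2 \<and> x$2 < 1 \<and> 0 \<le> x$3 \<and> x$3 < 1) \<and>
  (\<forall>r\<in>R. \<not> (x$1 < r$1 \<and> x$2 < r$2 \<and> x$3 < r$3)) \<and>
  (0 < x$1 \<longrightarrow> (\<exists>r\<in>R. x$1 = r$1 \<and> x$2 < r$2 \<and> x$3 < r$3)) \<and>
  (0 < x$2 \<longrightarrow> (\<exists>r\<in>R. x$2 = r$2 \<and> x$1 < r$1 \<and> x$3 < r$3)) \<and>
  (0 < x$3 \<longrightarrow> (\<exists>r\<in>R. x$3 = r$3 \<and> x$1 < r$1 \<and> x$2 < r$2))"
  unfolding Gc_def record_region_def strict_below_def mem_Collect_eq forall_3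
  apply (simp only: n3 simp_thms)
  by blast

definition emb :: "real \<Rightarrow> real \<times> real \<Rightarrow> real^3" where
  "emb h y = (\<chi> j. if j = 1 then fst y else if j = 2 then snd y else h)"

lemma emb_simps[simp]: "emb h y $ 1 = fst y" "emb h y $ 2 = snd y" "emb h y $ 3 = h"
  unfolding emb_def by (simp_all add: n3)

lemma emb_inj: "inj_on (emb h) A"
proof (rule inj_onI)
  fix x y assume "emb h x = emb h y"
  then have "fst x = fst y" "snd x = snd y" by (metis emb_simps(1), metis emb_simps(2))
  then show "x = y" by (simp add: prod_eq_iff)
qed

lemma level_image:
  assumes "\<And>x. x \<in> A \<longleftrightarrow> x$3 = h \<and> (x$1, x$2) \<in> B"
  shows "A = emb h ` B"
proof
  show "A \<subseteq> emb h ` B"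
  proof
    fix x assume "x \<in> A"
    then have h: "x$3 = h" "(x$1, x$2) \<in> B" using assms by auto
    have "x = emb h (x$1, x$2)"
      unfolding vec_eq_iff forall_3 using h by simp
    then show "x \<in> emb h ` B" using h(2) by blast
  qed
  show "emb h ` B \<subseteq> A"
  proof
    fix x assume "x \<in> emb h ` B"
    then obtain y where y: "y \<in> B" "x = emb h y" by blast
    then show "x \<in> A" using assms[of x] by simp
  qed
qed

definition proj :: "real^3 \<Rightarrow> real \<times> real" where "proj r = (r$1, r$2)"

lemma L0:
  assumes pos: "\<forall>r\<in>R. 0 < r$3"
  shows "x \<in> Gc R \<and> x$3 = 0 \<longleftrightarrow> x$3 = 0 \<and> (x$1, x$2) \<in> m2 (proj ` R)"
proof
  assume a: "x \<in> Gc R \<and> x$3 = 0"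
  then have g: "(0 \<le> x$1 \<and> x$1 < 1 \<and> 0 \<le> x$2 \<and> x$2 < 1)"
    "(\<forall>r\<in>R. \<not> (x$1 < r$1 \<and> x$2 < r$2 \<and> x$3 < r$3))"
    "(0 < x$1 \<longrightarrow> (\<exists>r\<in>R. x$1 = r$1 \<and> x$2 < r$2 \<and> x$3 < r$3))"
    "(0 < x$2 \<longrightarrow> (\<exists>r\<in>R. x$2 = r$2 \<and> x$1 < r$1 \<and> x$3 < r$3))"
    unfolding Gc_iff by auto
  have "\<forall>r\<in>R. r$1 \<le> x$1 \<or> r$2 \<le> x$2" using g(2) a pos by force
  moreover have "0 < x$1 \<longrightarrow> (\<exists>r\<in>R. x$1 = r$1 \<and> x$2 < r$2)" using g(3) by blast
  moreover have "0 < x$2 \<longrightarrow> (\<exists>r\<in>R. x$2 = r$2 \<and> x$1 < r$1)" using g(4) by blast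
  ultimately show "x$3 = 0 \<and> (x$1, x$2) \<in> m2 (proj ` R)"
    using g(1) a unfolding m2_def proj_def by auto
next
  assume a: "x$3 = 0 \<and> (x$1, x$2) \<in> m2 (proj ` R)"
  then have g: "(0 \<le> x$1 \<and> x$1 < 1 \<and> 0 \<le> x$2 \<and> x$2 < 1)"
    "\<forall>r\<in>R. r$1 \<le> x$1 \<or> r$2 \<le> x$2"
    "0 < x$1 \<longrightarrow> (\<exists>r\<in>R. x$1 = r$1 \<and> x$2 < r$2)"
    "0 < x$2 \<longrightarrow> (\<exists>r\<in>R. x$2 = r$2 \<and> x$1 < r$1)"
    unfolding m2_def proj_def by auto
  have "0 < x$1 \<longrightarrow> (\<exists>r\<in>R. x$1 = r$1 \<and> x$2 < r$2 \<and> x$3 < r$3)" using g(3) a pos by auto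
  moreover have "0 < x$2 \<longrightarrow> (\<exists>r\<in>R. x$2 = r$2 \<and> x$1 < r$1 \<and> x$3 < r$3)" using g(4) a pos by auto
  moreover have "\<forall>r\<in>R. \<not> (x$1 < r$1 \<and> x$2 < r$2 \<and> x$3 < r$3)" using g(2) by force
  ultimately show "x \<in> Gc R \<and> x$3 = 0" unfolding Gc_iff using g(1) a by simp
qed

lemma Ulev:
  assumes "p$3 < x$3"
  shows "x \<in> Gc (insert p R') \<longleftrightarrow> x \<in> Gc R'"
proof -
  have a: "\<not> x$3 < p$3" "x$3 \<noteq> p$3" using assms by auto
  show ?thesis unfolding Gc_iff using a by simp
qed

lemma Lc:
  assumes pR: "p \<notin> R'" and above: "\<forall>r\<in>R'. p$3 < r$3"
    and pb: "0 < p$3" "p$3 < 1"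
  shows "x \<in> Gc (insert p R') \<and> x$3 = p$3 \<longleftrightarrow>
     x$3 = p$3 \<and> (x$1, x$2) \<in> {y \<in> m2 (proj ` R'). fst y < p$1 \<and> snd y < p$2}"
proof
  assume a: "x \<in> Gc (insert p R') \<and> x$3 = p$3"
  then have g: "(0 \<le> x$1 \<and> x$1 < 1 \<and> 0 \<le> x$2 \<and> x$2 < 1)"
    "(\<forall>r\<in>R'. \<not> (x$1 < r$1 \<and> x$2 < r$2 \<and> x$3 < r$3))"
    "(0 < x$1 \<longrightarrow> (\<exists>r\<in>insert p R'. x$1 = r$1 \<and> x$2 < r$2 \<and> x$3 < r$3))"
    "(0 < x$2 \<longrightarrow> (\<exists>r\<in>insert p R'. x$2 = r$2 \<and> x$1 < r$1 \<and> x$3 < r$3))"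
    "(0 < x$3 \<longrightarrow> (\<exists>r\<in>insert p R'. x$3 = r$3 \<and> x$1 < r$1 \<and> x$2 < r$2))"
    unfolding Gc_iff by auto
  have "\<forall>r\<in>R'. r$1 \<le> x$1 \<or> r$2 \<le> x$2" using g(2) a above by force
  moreover have "0 < x$1 \<longrightarrow> (\<exists>r\<in>R'. x$1 = r$1 \<and> x$2 < r$2)" using g(3) a by auto
  moreover have "0 < x$2 \<longrightarrow> (\<exists>r\<in>R'. x$2 = r$2 \<and> x$1 < r$1)" using g(4) a by auto
  moreover have "x$1 < p$1 \<and> x$2 < p$2"
  proof -
    obtain r where r: "r \<in> insert p R'" "x$3 = r$3" "x$1 < r$1" "x$2 < r$2" using g(5) a pb by auto
    have "r = p" using r(1,2) a above by force
    then show ?thesis using r by simp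
  qed
  ultimately show "x$3 = p$3 \<and> (x$1, x$2) \<in> {y \<in> m2 (proj ` R'). fst y < p$1 \<and> snd y < p$2}"
    using g(1) a unfolding m2_def proj_def by auto
next
  assume a: "x$3 = p$3 \<and> (x$1, x$2) \<in> {y \<in> m2 (proj ` R'). fst y < p$1 \<and> snd y < p$2}"
  then have g: "(0 \<le> x$1 \<and> x$1 < 1 \<and> 0 \<le> x$2 \<and> x$2 < 1)"
    "\<forall>r\<in>R'. r$1 \<le> x$1 \<or> r$2 \<le> x$2"
    "0 < x$1 \<longrightarrow> (\<exists>r\<in>R'. x$1 = r$1 \<and> x$2 < r$2)"
    "0 < x$2 \<longrightarrow> (\<exists>r\<in>R'. x$2 = r$2 \<and> x$1 < r$1)"
    "x$1 < p$1" "x$2 < p$2"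
    unfolding m2_def proj_def by auto
  have "0 < x$1 \<longrightarrow> (\<exists>r\<in>insert p R'. x$1 = r$1 \<and> x$2 < r$2 \<and> x$3 < r$3)" using g(3) a above by auto
  moreover have "0 < x$2 \<longrightarrow> (\<exists>r\<in>insert p R'. x$2 = r$2 \<and> x$1 < r$1 \<and> x$3 < r$3)" using g(4) a above by auto
  moreover have "0 < x$3 \<longrightarrow> (\<exists>r\<in>insert p R'. x$3 = r$3 \<and> x$1 < r$1 \<and> x$2 < r$2)" using g(5,6) a by auto
  moreover have "\<forall>r\<in>insert p R'. \<not> (x$1 < r$1 \<and> x$2 < r$2 \<and> x$3 < r$3)" using g(2) a by force
  ultimately show "x \<in> Gc (insert p R') \<and> x$3 = p$3" unfolding Gc_iff using g(1) a pb by simp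
qed

lemma Gc_levels:
  assumes "x \<in> Gc R" and "\<forall>r\<in>R. c \<le> r$3"
  shows "x$3 = 0 \<or> c \<le> x$3"
proof -
  have "0 \<le> x$3" "0 < x$3 \<longrightarrow> (\<exists>r\<in>R. x$3 = r$3 \<and> x$1 < r$1 \<and> x$2 < r$2)"
    using assms(1) unfolding Gc_iff by auto
  then show ?thesis using assms(2) by force
qed


lemma Gc_empty: "Gc {} = {0}"
proof
  show "Gc {} \<subseteq> {0}"
  proof
    fix x assume "x \<in> Gc {}"
    then have "0 \<le> x$1" "0 \<le> x$2" "0 \<le> x$3" "\<not> 0 < x$1" "\<not> 0 < x$2" "\<not> 0 < x$3"
      unfolding Gc_iff by auto
    then have "x$1 = 0" "x$2 = 0" "x$3 = 0" by auto
    then have "x = 0" by (simp add: vec_eq_iff forall_3)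
    then show "x \<in> {0}" by simp
  qed
  have "(0::real^3) \<in> Gc {}" unfolding Gc_iff by simp
  then show "{0} \<subseteq> Gc {}" by simp
qed

lemma main:
  fixes R :: "(real^3) set"
  assumes "finite R" "\<forall>r\<in>R. \<forall>j. 0 < r$j \<and> r$j < 1"
   "\<forall>p\<in>R. \<forall>q\<in>R. p \<noteq> q \<longrightarrow> \<not> weak_below p q"
   "\<forall>p\<in>R. \<forall>q\<in>R. \<forall>i j. p$i = q$j \<longrightarrow> p = q \<and> i = j"
  shows "card (Gc R) = 2 * card R + 1"
  using assms
proof (induction "card R" arbitrary: R)
  case 0
  then have "R = {}" by simp
  then show ?case using Gc_empty by simp
next
  case (Suc n R)
  have fin: "finite R" and bnd: "\<forall>r\<in>R. \<forall>j. 0 < r$j \<and> r$j < 1"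
    and inc: "\<forall>p\<in>R. \<forall>q\<in>R. p \<noteq> q \<longrightarrow> \<not> weak_below p q"
    and dc: "\<forall>p\<in>R. \<forall>q\<in>R. \<forall>i j. p$i = q$j \<longrightarrow> p = q \<and> i = j" using Suc.prems by auto
  have ne: "R \<noteq> {}" using Suc.hyps(2) by auto
  define c where "c = Min ((\<lambda>r. r$3) ` R)"
  have "c \<in> (\<lambda>r. r$3) ` R" unfolding c_def using fin ne by (intro Min_in) auto
  then obtain p where pR: "p \<in> R" and pc: "p$3 = c" by auto
  have cle: "\<forall>r\<in>R. c \<le> r$3" unfolding c_def using fin by auto
  define R' where "R' = R - {p}"
  have RR: "R = insert p R'" and pR': "p \<notin> R'" using pR unfolding R'_def by auto
  have finR': "finite R'" using fin unfolding R'_def by auto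
  have cardR': "n = card R'" using Suc.hyps(2) pR fin unfolding R'_def by simp
  have b': "\<forall>r\<in>R'. \<forall>j. 0 < r$j \<and> r$j < 1" using bnd unfolding R'_def by auto
  have i': "\<forall>p\<in>R'. \<forall>q\<in>R'. p \<noteq> q \<longrightarrow> \<not> weak_below p q" using inc unfolding R'_def by auto
  have d': "\<forall>p\<in>R'. \<forall>q\<in>R'. \<forall>i j. p$i = q$j \<longrightarrow> p = q \<and> i = j" using dc unfolding R'_def by auto
  have IH: "card (Gc R') = 2 * card R' + 1"
    by (rule Suc.hyps(1)[OF cardR' finR' b' i' d'])
  have finG': "finite (Gc R')"
  proof (rule ccontr)
    assume "infinite (Gc R')"
    then have "card (Gc R') = 0" by simp
    then show False using IH by simp
  qed
  have above: "\<forall>r\<in>R'. p$3 < r$3"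
  proof
    fix r assume r: "r \<in> R'"
    then have "r \<noteq> p" "r \<in> R" using R'_def by auto
    then have "r$3 \<noteq> p$3" using dc[rule_format, OF \<open>r \<in> R\<close> pR, of 3 3] by blast
    moreover have "p$3 \<le> r$3" using cle pc \<open>r\<in>R\<close> by simp
    ultimately show "p$3 < r$3" by simp
  qed
  have pb: "0 < p$3" "p$3 < 1" "0 < p$1" "p$1 < 1" "0 < p$2" "p$2 < 1" using bnd pR by auto
  have pos: "\<forall>r\<in>R. 0 < r$3" "\<forall>r\<in>R'. 0 < r$3" using bnd R'_def by auto
  define P where "P = proj ` R'"
  define Bl where "Bl = {y \<in> m2 P. fst y < p$1 \<and> snd y < p$2}"
  have projR: "proj ` R = insert (p$1, p$2) P" unfolding P_def RR proj_def by simp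
  have A0: "{x \<in> Gc R. x$3 = 0} = emb 0 ` m2 (insert (p$1, p$2) P)"
    by (rule level_image) (use L0[OF pos(1)] projR in auto)
  have Ac: "{x \<in> Gc R. x$3 = p$3} = emb (p$3) ` Bl"
    by (rule level_image) (use Lc[OF pR' above pb(1,2)] RR in \<open>auto simp: Bl_def P_def\<close>)
  have B0: "{x \<in> Gc R'. x$3 = 0} = emb 0 ` m2 P"
    by (rule level_image) (use L0[OF pos(2)] in \<open>auto simp: P_def\<close>)
  define AU where "AU = {x \<in> Gc R'. p$3 < x$3}"
  have AU': "{x \<in> Gc R. p$3 < x$3} = AU" unfolding AU_def RR using Ulev by blast
  have finAU: "finite AU" using finG' unfolding AU_def by auto
  have finP: "finite P" using finR' unfolding P_def by auto
  have GR: "Gc R = {x \<in> Gc R. x$3 = 0} \<union> {x \<in> Gc R. x$3 = p$3} \<union> {x \<in> Gc R. p$3 < x$3}"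
    using Gc_levels[OF _ cle] pc by fastforce
  have GR': "Gc R' = {x \<in> Gc R'. x$3 = 0} \<union> AU"
  proof -
    have "x$3 = 0 \<or> p$3 < x$3" if "x \<in> Gc R'" for x
    proof -
      have "0 \<le> x$3" "0 < x$3 \<longrightarrow> (\<exists>r\<in>R'. x$3 = r$3 \<and> x$1 < r$1 \<and> x$2 < r$2)"
        using that unfolding Gc_iff by auto
      then show ?thesis using above by force
    qed
    then show ?thesis unfolding AU_def by blast
  qed
  have f0: "finite (m2 (insert (p$1, p$2) P))" "finite (m2 P)" "finite Bl"
    using m2_finite finP unfolding Bl_def by auto
  have c1: "card (Gc R) = card (m2 (insert (p$1, p$2) P)) + card Bl + card AU"
  proof -
    have "card (Gc R) = card (emb 0 ` m2 (insert (p$1, p$2) P) \<union> emb (p$3) ` Bl \<union> AU)"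
      using GR A0 Ac AU' by metis
    also have "\<dots> = card (emb 0 ` m2 (insert (p$1, p$2) P)) + card (emb (p$3) ` Bl) + card AU"
    proof -
      have d1: "emb 0 ` m2 (insert (p$1, p$2) P) \<inter> emb (p$3) ` Bl = {}"
      proof -
        have "emb 0 a \<noteq> emb (p$3) b" for a b
        proof
          assume "emb 0 a = emb (p$3) b"
          then have "(emb 0 a)$3 = (emb (p$3) b)$3" by simp
          then show False using pb by simp
        qed
        then show ?thesis by blast
      qed
      have d2: "(emb 0 ` m2 (insert (p$1, p$2) P) \<union> emb (p$3) ` Bl) \<inter> AU = {}"
        using pb unfolding AU_def by auto
      show ?thesis using d1 d2 f0 finAU by (simp add: card_Un_disjoint)
    qed
    also have "\<dots> = card (m2 (insert (p$1, p$2) P)) + card Bl + card AU"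
      using card_image[OF emb_inj] by simp
    finally show ?thesis .
  qed
  have c2: "card (Gc R') = card (m2 P) + card AU"
  proof -
    have "card (Gc R') = card (emb 0 ` m2 P \<union> AU)" using GR' B0 by metis
    also have "\<dots> = card (emb 0 ` m2 P) + card AU"
      using f0 finAU pb unfolding AU_def by (subst card_Un_disjoint) auto
    also have "\<dots> = card (m2 P) + card AU" using card_image[OF emb_inj] by simp
    finally show ?thesis .
  qed
  have step: "card (m2 (insert (p$1, p$2) P)) + card Bl = card (m2 P) + 2"
    unfolding Bl_def
  proof (rule m2_step[OF finP])
    show "\<forall>z\<in>P. 0 < fst z \<and> fst z < 1 \<and> 0 < snd z \<and> snd z < 1"
      using bnd unfolding P_def R'_def proj_def by auto
    show "\<forall>z\<in>P. \<not> (p$1 \<le> fst z \<and> p$2 \<le> snd z)"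
    proof
      fix z assume "z \<in> P"
      then obtain r where r: "r \<in> R'" "z = proj r" unfolding P_def by auto
      then have "r \<in> R" "r \<noteq> p" using R'_def by auto
      then have "\<not> weak_below p r" using inc[rule_format, OF pR] by metis
      moreover have "p$3 \<le> r$3" using above r(1) by auto
      ultimately show "\<not> (p$1 \<le> fst z \<and> p$2 \<le> snd z)"
        unfolding weak_below_def forall_3 r(2) proj_def by auto
    qed
    show "\<forall>z\<in>P. fst z \<noteq> p$1 \<and> snd z \<noteq> p$2"
    proof
      fix z assume "z \<in> P"
      then obtain r where r: "r \<in> R'" "z = proj r" unfolding P_def by auto
      then have "r \<in> R" "r \<noteq> p" using R'_def by auto
      then have "r$1 \<noteq> p$1" "r$2 \<noteq> p$2"
        using dc[rule_format, OF \<open>r \<in> R\<close> pR, of 1 1] dc[rule_format, OF \<open>r \<in> R\<close> pR, of 2 2] by blast+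
      then show "fst z \<noteq> p$1 \<and> snd z \<noteq> p$2" unfolding r(2) proj_def by simp
    qed
  qed (use pb in auto)
  have "card R = Suc (card R')" using cardR' Suc.hyps(2) by simp
  then show ?case using c1 c2 step IH by simp
qed

theorem corollaryC:
  fixes \<rho> :: nat and r :: "nat \<Rightarrow> real^3"
  assumes in_open_cube: "\<forall>i\<in>{1..\<rho>}. \<forall>j. 0 < r i $ j \<and> r i $ j < 1"
    and pairwise_incomparable: "\<forall>i\<in>{1..\<rho>}. \<forall>k\<in>{1..\<rho>}. i \<noteq> k \<longrightarrow> incomparable (r i) (r k)"
    and distinct_coords: "inj_on (\<lambda>(i, j). r i $ j) ({1..\<rho>} \<times> (UNIV :: 3 set))"
  shows "card (generators (record_region (r ` {1..\<rho>}))) = 2 * \<rho> + 1"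
proof -
  define R where "R = r ` {1..\<rho>}"
  have injc: "r i $ a = r k $ b \<Longrightarrow> i \<in> {1..\<rho>} \<Longrightarrow> k \<in> {1..\<rho>} \<Longrightarrow> i = k \<and> a = b" for i k a b
    using inj_onD[OF distinct_coords, of "(i,a)" "(k,b)"] by auto
  have inj: "inj_on r {1..\<rho>}"
    by (rule inj_onI) (metis injc)
  have cardR: "card R = \<rho>" unfolding R_def using card_image[OF inj] by simp
  have fin: "finite R" unfolding R_def by simp
  have bnd: "\<forall>x\<in>R. \<forall>j. 0 < x$j \<and> x$j < 1" using in_open_cube unfolding R_def by auto
  have inc: "\<forall>p\<in>R. \<forall>q\<in>R. p \<noteq> q \<longrightarrow> \<not> weak_below p q"
  proof (intro ballI impI)
    fix p q assume pq: "p \<in> R" "q \<in> R" "p \<noteq> q"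
    then obtain i k where ik: "i \<in> {1..\<rho>}" "k \<in> {1..\<rho>}" "p = r i" "q = r k"
      unfolding R_def by auto
    then have "i \<noteq> k" using pq(3) by auto
    then have "incomparable (r i) (r k)" using pairwise_incomparable ik(1,2) by simp
    then show "\<not> weak_below p q" unfolding incomparable_def ik(3,4) by simp
  qed
  have dc: "\<forall>p\<in>R. \<forall>q\<in>R. \<forall>a b. p$a = q$b \<longrightarrow> p = q \<and> a = b"
  proof (intro ballI allI impI)
    fix p q a b assume pq: "p \<in> R" "q \<in> R" "p$a = q$b"
    then obtain i k where ik: "i \<in> {1..\<rho>}" "k \<in> {1..\<rho>}" "p = r i" "q = r k"
      unfolding R_def by auto
    then have "i = k \<and> a = b" using injc pq(3) by simp
    then show "p = q \<and> a = b" using ik by simp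
  qed
  have "card (Gc R) = 2 * card R + 1" by (rule main[OF fin bnd inc dc])
  then show ?thesis using gen_char[OF fin] cardR unfolding R_def by simp
qed

end
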